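(* Let $A=(a_{kl})$ be an $n\times n$ matrix with entries in $\{0,1,2,\dots\}\cup\{\infty\}$ and no zeros on the diagonal. Let $i\neq j$ be indices such that $a_{ij}\neq0$ and row $j$ of $A$ contains no $\infty$. Let $A'$ be obtained from $A$ by replacing row $i$ with $(a_{i1}+a_{j1},\dots,a_{in}+a_{jn})$ and then subtracting $1$ from the $(i,j)$ entry, so that the new $(i,j)$ entry is $a_{ij}+a_{jj}-1$. All other rows are unchanged. Then $A\sim_M A'$. Moreover: - $A'$ has no zeros on the diagonal; - if $A$ is irreducible, so is $A'$; - if the top-left $m\times m$ corner of $A$ is irreducible, so is the top-left $m\times m$ corner of $A'$.
   Context: Arithmetic conventions: $\infty+a=\infty$ and $\infty-1=\infty$. For a finite index set $X$ and an $X\times X$ matrix $A$ with entries in $\{0,1,2,\dots\}\cup\{\infty\}$, $G_A$ is the graph with vertex set $X$ and exactly $A(x,y)$ edges from $x$ to $y$. A matrix $A$ is irreducible if $G_A$ is strongly connected. For matrices, $A\sim_M B$ means $G_A\sim_M G_B$. A graph $G=(G^0,G^1,r,s)$ may have multiple edges and loops. A source receives no edges, a sink emits no edges, and an infinite emitter emits infinitely many edges. A vertex is singular if it is a sink or infinite emitter, and regular otherwise. Move-equivalence $\sim_M$ is the smallest equivalence relation on graphs with finitely many vertices such that $G\sim_M E$ whenever $E$ is isomorphic to a graph obtained from $G$ by one of the following moves. (S) Delete a regular source together with the edges it emits. (R) For a regular vertex $u$ emitting exactly one edge $f$, with $r(f)\neq u$, and all of whose incoming edges have the same source $v$: delete $u$,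 $f$ and the edges into $u$, and add for each $e\in r^{-1}(u)$ an edge $[ef]$ from $v$ to $r(f)$. (O) Out-splitting at a non-sink $v$ along a partition $\mathcal E_1,\dots,\mathcal E_n$ of $s^{-1}(v)$ with at most one infinite part. Replace $v$ by $v^1,\dots,v^n$. Each edge $e$ into $v$ becomes copies $e^1,\dots,e^n$ with $r(e^i)=v^i$ and source $s(e)$, or source $v^j$ if $s(e)=v$ and $e\in\mathcal E_j$. An edge from $v$ to $w\neq v$ lying in $\mathcal E_i$ gets source $v^i$. (I) In-splitting at a regular non-source $v$ along a partition $\mathcal E_1,\dots,\mathcal E_n$ of $r^{-1}(v)$. Replace $v$ by $v^1,\dots,v^n$. Each edge $e$ out of $v$ becomes copies $e^1,\dots,e^n$ with $s(e^i)=v^i$ and range $r(e)$, or range $v^j$ if $r(e)=v$ and $e\in\mathcal E_j$. An edge into $v$ from $w\neq v$ lying in $\mathcal E_i$ gets range $v^i$. *)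

theory Defs
  imports Main "HOL-Library.Extended_Nat" "HOL-Library.Nat_Bijection"
begin

record ('v, 'e) graph =
  gV :: "'v set"
  gE :: "'e set"
  gs :: "'e \<Rightarrow> 'v"
  gr :: "'e \<Rightarrow> 'v"

definition wf_graph :: "('v, 'e) graph \<Rightarrow> bool" where
  "wf_graph G \<longleftrightarrow> gs G ` gE G \<subseteq> gV G \<and> gr G ` gE G \<subseteq> gV G"

definition fin_graph :: "('v, 'e) graph \<Rightarrow> bool" where
  "fin_graph G \<longleftrightarrow> wf_graph G \<and> finite (gV G)"

definition out_edges :: "('v, 'e) graph \<Rightarrow> 'v \<Rightarrow> 'e set" where
  "out_edges G v = {e \<in> gE G. gs G e = v}"

definition in_edges :: "('v, 'e) graph \<Rightarrow> 'v \<Rightarrow> 'e set" where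
  "in_edges G v = {e \<in> gE G. gr G e = v}"

definition is_source :: "('v, 'e) graph \<Rightarrow> 'v \<Rightarrow> bool" where
  "is_source G v \<longleftrightarrow> in_edges G v = {}"

definition is_sink :: "('v, 'e) graph \<Rightarrow> 'v \<Rightarrow> bool" where
  "is_sink G v \<longleftrightarrow> out_edges G v = {}"

definition inf_emitter :: "('v, 'e) graph \<Rightarrow> 'v \<Rightarrow> bool" where
  "inf_emitter G v \<longleftrightarrow> infinite (out_edges G v)"

definition regular :: "('v, 'e) graph \<Rightarrow> 'v \<Rightarrow> bool" where
  "regular G v \<longleftrightarrow> \<not> is_sink G v \<and> \<not> inf_emitter G v"

definition graph_iso :: "('v, 'e) graph \<Rightarrow> ('w, 'f) graph \<Rightarrow> bool" where
  "graph_iso G H \<longleftrightarrow> (\<exists>fv fe. bij_betw fv (gV G) (gV H) \<and> bij_betw fe (gE G) (gE H) \<and>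
     (\<forall>e\<in>gE G. gs H (fe e) = fv (gs G e) \<and> gr H (fe e) = fv (gr G e)))"

definition is_partition :: "'e set \<Rightarrow> ('e \<Rightarrow> nat) \<Rightarrow> nat \<Rightarrow> bool" where
  "is_partition S P n \<longleftrightarrow> (\<forall>e\<in>S. P e < n) \<and> (\<forall>i<n. \<exists>e\<in>S. P e = i)"

definition moveS_ok :: "('v, 'e) graph \<Rightarrow> 'v \<Rightarrow> bool" where
  "moveS_ok G v \<longleftrightarrow> v \<in> gV G \<and> regular G v \<and> is_source G v"

definition moveS :: "('v, 'e) graph \<Rightarrow> 'v \<Rightarrow> ('v, 'e) graph" where
  "moveS G v = \<lparr>gV = gV G - {v}, gE = gE G - out_edges G v, gs = gs G, gr = gr G\<rparr>"

text \<open>(R) reduction; the new edge [ef] is represented as Inr e\<close>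
definition moveR_ok :: "('v, 'e) graph \<Rightarrow> 'v \<Rightarrow> 'e \<Rightarrow> bool" where
  "moveR_ok G u f \<longleftrightarrow> u \<in> gV G \<and> regular G u \<and> out_edges G u = {f} \<and> gr G f \<noteq> u \<and>
     (\<exists>v \<in> gV G. \<forall>e\<in>in_edges G u. gs G e = v)"

definition moveR :: "('v, 'e) graph \<Rightarrow> 'v \<Rightarrow> 'e \<Rightarrow> ('v, 'e + 'e) graph" where
  "moveR G u f = \<lparr>gV = gV G - {u},
     gE = Inl ` (gE G - {f} - in_edges G u) \<union> Inr ` in_edges G u,
     gs = (\<lambda>x. case x of Inl e \<Rightarrow> gs G e | Inr e \<Rightarrow> gs G e),
     gr = (\<lambda>x. case x of Inl e \<Rightarrow> gr G e | Inr e \<Rightarrow> gr G f)\<rparr>"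

text \<open>(O) out-splitting at v along the partition P (parts 0..n-1) of s^-1(v);
  old vertex w is Inl w, new vertex v^i is Inr i; old edge e (not into v) is Inl e,
  the copy e^i of an edge e into v is Inr (e, i).\<close>
definition moveO_ok :: "('v, 'e) graph \<Rightarrow> 'v \<Rightarrow> ('e \<Rightarrow> nat) \<Rightarrow> nat \<Rightarrow> bool" where
  "moveO_ok G v P n \<longleftrightarrow> v \<in> gV G \<and> \<not> is_sink G v \<and> is_partition (out_edges G v) P n \<and>
     card {i. i < n \<and> infinite {e \<in> out_edges G v. P e = i}} \<le> 1"

definition moveO :: "('v, 'e) graph \<Rightarrow> 'v \<Rightarrow> ('e \<Rightarrow> nat) \<Rightarrow> nat \<Rightarrow> ('v + nat, 'e + 'e \<times> nat) graph" where
  "moveO G v P n =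
    (let sv = (\<lambda>e. if gs G e = v then Inr (P e) else Inl (gs G e)) in
     \<lparr>gV = Inl ` (gV G - {v}) \<union> Inr ` {..<n},
      gE = Inl ` (gE G - in_edges G v) \<union> Inr ` (in_edges G v \<times> {..<n}),
      gs = (\<lambda>x. case x of Inl e \<Rightarrow> sv e | Inr (e, i) \<Rightarrow> sv e),
      gr = (\<lambda>x. case x of Inl e \<Rightarrow> Inl (gr G e) | Inr (e, i) \<Rightarrow> Inr i)\<rparr>)"

text \<open>(I) in-splitting at v along the partition P (parts 0..n-1) of r^-1(v);
  the copy e^i of an edge e out of v is Inr (e, i).\<close>
definition moveI_ok :: "('v, 'e) graph \<Rightarrow> 'v \<Rightarrow> ('e \<Rightarrow> nat) \<Rightarrow> nat \<Rightarrow> bool" where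
  "moveI_ok G v P n \<longleftrightarrow> v \<in> gV G \<and> regular G v \<and> \<not> is_source G v \<and>
     is_partition (in_edges G v) P n"

definition moveI :: "('v, 'e) graph \<Rightarrow> 'v \<Rightarrow> ('e \<Rightarrow> nat) \<Rightarrow> nat \<Rightarrow> ('v + nat, 'e + 'e \<times> nat) graph" where
  "moveI G v P n =
    (let rv = (\<lambda>e. if gr G e = v then Inr (P e) else Inl (gr G e)) in
     \<lparr>gV = Inl ` (gV G - {v}) \<union> Inr ` {..<n},
      gE = Inl ` (gE G - out_edges G v) \<union> Inr ` (out_edges G v \<times> {..<n}),
      gs = (\<lambda>x. case x of Inl e \<Rightarrow> Inl (gs G e) | Inr (e, i) \<Rightarrow> Inr i),
      gr = (\<lambda>x. case x of Inl e \<Rightarrow> rv e | Inr (e, i) \<Rightarrow> rv e)\<rparr>)"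

definition move_step :: "('v, 'e) graph \<Rightarrow> ('v, 'e) graph \<Rightarrow> bool" where
  "move_step G E \<longleftrightarrow> fin_graph G \<and> fin_graph E \<and>
    ((\<exists>v. moveS_ok G v \<and> graph_iso (moveS G v) E) \<or>
     (\<exists>u f. moveR_ok G u f \<and> graph_iso (moveR G u f) E) \<or>
     (\<exists>v P n. moveO_ok G v P n \<and> graph_iso (moveO G v P n) E) \<or>
     (\<exists>v P n. moveI_ok G v P n \<and> graph_iso (moveI G v P n) E))"

definition move_equiv :: "('v, 'e) graph \<Rightarrow> ('v, 'e) graph \<Rightarrow> bool" where
  "move_equiv G E \<longleftrightarrow> fin_graph G \<and> fin_graph E \<and> (symclp move_step)\<^sup>*\<^sup>* G E"

text \<open>G_A has vertex set {0..<n} and exactly A x y edges from x to y; edge number k from x to y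
  is encoded as the natural number prod_encode (prod_encode (x, y), k).\<close>
definition mgraph :: "nat \<Rightarrow> (nat \<Rightarrow> nat \<Rightarrow> enat) \<Rightarrow> (nat, nat) graph" where
  "mgraph n A = \<lparr>gV = {..<n},
     gE = {prod_encode (prod_encode (x, y), k) | x y k. x < n \<and> y < n \<and> enat k < A x y},
     gs = (\<lambda>e. fst (prod_decode (fst (prod_decode e)))),
     gr = (\<lambda>e. snd (prod_decode (fst (prod_decode e))))\<rparr>"

definition mat_move_equiv :: "nat \<Rightarrow> (nat \<Rightarrow> nat \<Rightarrow> enat) \<Rightarrow> (nat \<Rightarrow> nat \<Rightarrow> enat) \<Rightarrow> bool" where
  "mat_move_equiv n A B \<longleftrightarrow> move_equiv (mgraph n A) (mgraph n B)"

definition strongly_connected :: "('v, 'e) graph \<Rightarrow> bool" where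
  "strongly_connected G \<longleftrightarrow>
     (\<forall>x\<in>gV G. \<forall>y\<in>gV G. (x, y) \<in> {(gs G e, gr G e) | e. e \<in> gE G}\<^sup>*)"

text \<open>The (top-left) m x m matrix A is irreducible iff G_A is strongly connected.\<close>
definition irreducible_mat :: "nat \<Rightarrow> (nat \<Rightarrow> nat \<Rightarrow> enat) \<Rightarrow> bool" where
  "irreducible_mat m A \<longleftrightarrow> strongly_connected (mgraph m A)"

definition row_add :: "(nat \<Rightarrow> nat \<Rightarrow> enat) \<Rightarrow> nat \<Rightarrow> nat \<Rightarrow> (nat \<Rightarrow> nat \<Rightarrow> enat)" where
  "row_add A i j = (\<lambda>k l. if k = i then (if l = j then A i l + A j l - 1 else A i l + A j l)
                          else A k l)"

end

theory Submission
  imports Defs "HOL-Library.Countable_Set"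
begin


definition between :: "('v, 'e) graph \<Rightarrow> 'v \<Rightarrow> 'v \<Rightarrow> 'e set" where
  "between G x y = {e \<in> gE G. gs G e = x \<and> gr G e = y}"

definition ecard :: "'a set \<Rightarrow> enat" where
  "ecard S = (if finite S then enat (card S) else \<infinity>)"

lemma ecard_empty[simp]: "ecard {} = 0"
  by (simp add: ecard_def zero_enat_def)

lemma ecard_single[simp]: "ecard {x} = 1"
  by (simp add: ecard_def one_enat_def)

lemma ecard_image: "inj_on f S \<Longrightarrow> ecard (f ` S) = ecard S"
  by (simp add: ecard_def finite_image_iff card_image)

lemma ecard_Un: "A \<inter> B = {} \<Longrightarrow> ecard (A \<union> B) = ecard A + ecard B"
  by (auto simp add: ecard_def card_Un_disjoint)

lemma ecard_times_single: "ecard (S \<times> {b}) = ecard S"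
proof -
  have "S \<times> {b} = (\<lambda>x. (x, b)) ` S" by auto
  then show ?thesis by (simp add: ecard_image inj_on_def)
qed

lemma ecard_remove: "x \<in> S \<Longrightarrow> ecard (S - {x}) = ecard S - 1"
  by (auto simp add: ecard_def one_enat_def)

lemma ecard_finite: "ecard S \<noteq> \<infinity> \<Longrightarrow> finite S"
  by (auto simp add: ecard_def split: if_splits)

lemma ecard_bij:
  assumes "countable S" "countable T" "ecard S = ecard T"
  shows "\<exists>b. bij_betw b S T"
proof (cases "finite S")
  case True
  then have "finite T" "card S = card T" using assms(3) by (auto simp: ecard_def split: if_splits)
  then show ?thesis using True finite_same_card_bij by blast
next
  case False
  then have "infinite T" using assms(3) by (auto simp: ecard_def split: if_splits)
  obtain e1 :: "_ \<Rightarrow> nat" where e1: "bij_betw e1 S UNIV" using countableE_infinite assms(1) False by blast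
  obtain e2 :: "_ \<Rightarrow> nat" where e2: "bij_betw e2 T UNIV" using countableE_infinite assms(2) \<open>infinite T\<close> by blast
  have "bij_betw (inv_into T e2 \<circ> e1) S T"
    using e1 bij_betw_inv_into[OF e2] bij_betw_trans by blast
  then show ?thesis by blast
qed

lemma iso_by_counts:
  fixes G :: "('v, 'e::countable) graph" and H :: "('w, 'f::countable) graph"
  assumes wG: "wf_graph G" and wH: "wf_graph H"
    and fv: "bij_betw fv (gV G) (gV H)"
    and cnt: "\<forall>x\<in>gV G. \<forall>y\<in>gV G. ecard (between G x y) = ecard (between H (fv x) (fv y))"
  shows "graph_iso G H"
proof -
  have "\<forall>p. \<exists>b. (fst p \<in> gV G \<and> snd p \<in> gV G) \<longrightarrow>
      bij_betw b (between G (fst p) (snd p)) (between H (fv (fst p)) (fv (snd p)))"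
    using cnt ecard_bij by (metis countableI_type)
  then obtain b where b: "\<And>p. fst p \<in> gV G \<Longrightarrow> snd p \<in> gV G \<Longrightarrow>
      bij_betw (b p) (between G (fst p) (snd p)) (between H (fv (fst p)) (fv (snd p)))"
    by metis
  define fe where "fe e = b (gs G e, gr G e) e" for e
  have sV: "gs G e \<in> gV G" "gr G e \<in> gV G" if "e \<in> gE G" for e
    using wG that by (auto simp: wf_graph_def)
  have inB: "e \<in> between G (gs G e) (gr G e)" if "e \<in> gE G" for e
    using that by (simp add: between_def)
  have feB: "fe e \<in> between H (fv (gs G e)) (fv (gr G e))" if "e \<in> gE G" for e
    using b[of "(gs G e, gr G e)"] sV[OF that] inB[OF that] unfolding fe_def bij_betw_def by auto
  have inj: "inj_on fe (gE G)"
  proof (rule inj_onI)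
    fix e1 e2 assume e: "e1 \<in> gE G" "e2 \<in> gE G" "fe e1 = fe e2"
    have "fv (gs G e1) = fv (gs G e2)" "fv (gr G e1) = fv (gr G e2)"
      using feB[OF e(1)] feB[OF e(2)] e(3) by (auto simp: between_def)
    then have eq: "gs G e1 = gs G e2" "gr G e1 = gr G e2"
      using fv sV e by (auto simp: bij_betw_def inj_on_def)
    then show "e1 = e2"
      using b[of "(gs G e1, gr G e1)"] sV[OF e(1)] inB[OF e(1)] inB[OF e(2)] e(3)
      unfolding fe_def bij_betw_def inj_on_def by (metis fst_conv snd_conv)
  qed
  have surj: "fe ` gE G = gE H"
  proof
    show "fe ` gE G \<subseteq> gE H" using feB by (auto simp: between_def)
  next
    show "gE H \<subseteq> fe ` gE G"
    proof
      fix e' assume e': "e' \<in> gE H"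
      then have "gs H e' \<in> gV H" "gr H e' \<in> gV H" using wH by (auto simp: wf_graph_def)
      then obtain x y where xy: "x \<in> gV G" "y \<in> gV G" "gs H e' = fv x" "gr H e' = fv y"
        using fv unfolding bij_betw_def by (metis imageE)
      then have "e' \<in> between H (fv x) (fv y)" using e' by (simp add: between_def)
      then obtain e where e: "e \<in> between G x y" "b (x, y) e = e'"
        using b[of "(x,y)"] xy unfolding bij_betw_def by (metis fst_conv snd_conv imageE)
      then have "e \<in> gE G" "gs G e = x" "gr G e = y" by (auto simp: between_def)
      then show "e' \<in> fe ` gE G" using e unfolding fe_def by auto
    qed
  qed
  have "\<forall>e\<in>gE G. gs H (fe e) = fv (gs G e) \<and> gr H (fe e) = fv (gr G e)"
    using feB by (auto simp: between_def)
  then show ?thesis unfolding graph_iso_def using fv inj surj bij_betw_def by blast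
qed



abbreviation enc :: "nat \<Rightarrow> nat \<Rightarrow> nat \<Rightarrow> nat" where
  "enc x y k \<equiv> prod_encode (prod_encode (x, y), k)"

lemma mgraph_simps:
  "gV (mgraph M C) = {..<M}"
  "gs (mgraph M C) (enc x y k) = x"
  "gr (mgraph M C) (enc x y k) = y"
  by (simp_all add: mgraph_def)

lemma mgraph_E: "enc x y k \<in> gE (mgraph M C) \<longleftrightarrow> x < M \<and> y < M \<and> enat k < C x y"
  by (auto simp: mgraph_def)

lemma mgraph_E_cases:
  assumes "e \<in> gE (mgraph M C)"
  obtains x y k where "e = enc x y k" "x < M" "y < M" "enat k < C x y"
  using assms by (auto simp: mgraph_def)

lemma wf_mgraph: "wf_graph (mgraph M C)"
  unfolding wf_graph_def by (auto elim!: mgraph_E_cases simp: mgraph_simps)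

lemma fin_mgraph: "fin_graph (mgraph M C)"
  unfolding fin_graph_def using wf_mgraph by (simp add: mgraph_simps)

lemma mgraph_cong: "(\<And>x y. x < M \<Longrightarrow> y < M \<Longrightarrow> C x y = D x y) \<Longrightarrow> mgraph M C = mgraph M D"
  unfolding mgraph_def by (auto intro!: Collect_cong) 

lemma mgraph_between: "x < M \<Longrightarrow> y < M \<Longrightarrow>
  between (mgraph M C) x y = (\<lambda>k. enc x y k) ` {k. enat k < C x y}"
  by (auto simp: between_def mgraph_def)

lemma ecard_less: "ecard {k. enat k < c} = c"
proof (cases c)
  case (enat d)
  then have "{k. enat k < c} = {..<d}" by auto
  then show ?thesis using enat by (simp add: ecard_def)
next
  case infinity
  then show ?thesis by (simp add: ecard_def)
qed

lemma ecard_mgraph: "x < M \<Longrightarrow> y < M \<Longrightarrow> ecard (between (mgraph M C) x y) = C x y"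
  by (simp add: mgraph_between ecard_image inj_on_def ecard_less)

lemma out_edges_between: "wf_graph G \<Longrightarrow> out_edges G x = (\<Union>y\<in>gV G. between G x y)"
  by (auto simp: out_edges_def between_def wf_graph_def)

lemma in_edges_between: "wf_graph G \<Longrightarrow> in_edges G y = (\<Union>x\<in>gV G. between G x y)"
  by (auto simp: in_edges_def between_def wf_graph_def)

lemma mgraph_out_finite: "(\<forall>y<M. C x y \<noteq> \<infinity>) \<Longrightarrow> x < M \<Longrightarrow> finite (out_edges (mgraph M C) x)"
  by (simp add: out_edges_between wf_mgraph mgraph_simps ecard_mgraph ecard_finite)

lemma between_moveR:
  assumes "x \<noteq> w" "y \<noteq> w" "gs G f = w"
  shows "between (moveR G w f) x y = Inl ` between G x y \<union> Inr ` (if y = gr G f then between G x w else {})"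
  using assms by (intro set_eqI, case_tac xa) (auto simp: between_def moveR_def in_edges_def)

lemma ecard_moveR:
  assumes "x \<noteq> w" "y \<noteq> w" "gs G f = w"
  shows "ecard (between (moveR G w f) x y) = ecard (between G x y) + (if y = gr G f then ecard (between G x w) else 0)"
  unfolding between_moveR[OF assms]
  by (subst ecard_Un) (auto simp: ecard_image inj_on_def)

lemma between_moveO:
  "x \<noteq> v \<Longrightarrow> y \<noteq> v \<Longrightarrow> between (moveO G v P n) (Inl x) (Inl y) = Inl ` between G x y"
  "y \<noteq> v \<Longrightarrow> between (moveO G v P n) (Inr a) (Inl y) = Inl ` {e \<in> between G v y. P e = a}"
  "x \<noteq> v \<Longrightarrow> b < n \<Longrightarrow> between (moveO G v P n) (Inl x) (Inr b) = Inr ` (between G x v \<times> {b})"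
  "b < n \<Longrightarrow> between (moveO G v P n) (Inr a) (Inr b) = Inr ` ({e \<in> between G v v. P e = a} \<times> {b})"
  by (intro set_eqI, case_tac xa, auto simp: between_def moveO_def Let_def in_edges_def split: if_splits)+

lemma between_moveI:
  "x \<noteq> v \<Longrightarrow> y \<noteq> v \<Longrightarrow> between (moveI G v P n) (Inl x) (Inl y) = Inl ` between G x y"
  "x \<noteq> v \<Longrightarrow> between (moveI G v P n) (Inl x) (Inr b) = Inl ` {e \<in> between G x v. P e = b}"
  "a < n \<Longrightarrow> y \<noteq> v \<Longrightarrow> between (moveI G v P n) (Inr a) (Inl y) = Inr ` (between G v y \<times> {a})"
  "a < n \<Longrightarrow> between (moveI G v P n) (Inr a) (Inr b) = Inr ` ({e \<in> between G v v. P e = b} \<times> {a})"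
  by (intro set_eqI, case_tac xa, auto simp: between_def moveI_def Let_def out_edges_def split: if_splits)+



lemma step_equiv: "move_step G E \<Longrightarrow> move_equiv G E"
proof -
  assume a: "move_step G E"
  then have "(symclp move_step)\<^sup>*\<^sup>* G E" by (meson r_into_rtranclp symclpI(1))
  then show ?thesis using a by (simp add: move_equiv_def move_step_def)
qed

lemma equiv_trans: "move_equiv G E \<Longrightarrow> move_equiv E F \<Longrightarrow> move_equiv G F"
  by (auto simp: move_equiv_def)

lemma wf_moveR:
  assumes w: "wf_graph G" and ok: "moveR_ok G u f"
  shows "wf_graph (moveR G u f)"
proof -
  have o: "out_edges G u = {f}" "gr G f \<noteq> u" using ok by (auto simp: moveR_ok_def)
  then have f: "f \<in> gE G" "gs G f = u" by (auto simp: out_edges_def)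
  have V: "gs G e \<in> gV G" "gr G e \<in> gV G" if "e \<in> gE G" for e using w that by (auto simp: wf_graph_def)
  have ns: "gs G e \<noteq> u" if "e \<in> gE G" "e \<noteq> f" for e
    using o(1) that by (auto simp: out_edges_def)
  show ?thesis unfolding wf_graph_def
  proof (intro conjI subsetI)
    fix z assume "z \<in> gs (moveR G u f) ` gE (moveR G u f)"
    then obtain x where x: "x \<in> gE (moveR G u f)" "z = gs (moveR G u f) x" by blast
    show "z \<in> gV (moveR G u f)"
    proof (cases x)
      case (Inl e) then show ?thesis using x V ns by (auto simp: moveR_def)
    next
      case (Inr e) then show ?thesis using x V ns o f by (auto simp: moveR_def in_edges_def)
    qed
  next
    fix z assume "z \<in> gr (moveR G u f) ` gE (moveR G u f)"
    then obtain x where x: "x \<in> gE (moveR G u f)" "z = gr (moveR G u f) x" by blast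
    show "z \<in> gV (moveR G u f)"
    proof (cases x)
      case (Inl e) then show ?thesis using x V by (auto simp: moveR_def in_edges_def)
    next
      case (Inr e) then show ?thesis using x V o f by (auto simp: moveR_def in_edges_def)
    qed
  qed
qed

lemma wf_moveO:
  assumes w: "wf_graph G" and ok: "moveO_ok G v P n"
  shows "wf_graph (moveO G v P n)"
proof -
  have V: "gs G e \<in> gV G" "gr G e \<in> gV G" if "e \<in> gE G" for e using w that by (auto simp: wf_graph_def)
  have Pl: "P e < n" if "e \<in> gE G" "gs G e = v" for e
    using ok that by (auto simp: moveO_ok_def is_partition_def out_edges_def)
  show ?thesis unfolding wf_graph_def
  proof (intro conjI subsetI)
    fix z assume "z \<in> gs (moveO G v P n) ` gE (moveO G v P n)"
    then obtain x where x: "x \<in> gE (moveO G v P n)" "z = gs (moveO G v P n) x" by blast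
    show "z \<in> gV (moveO G v P n)"
    proof (cases x)
      case (Inl e) then show ?thesis using x V Pl by (auto simp: moveO_def Let_def)
    next
      case (Inr p) then show ?thesis using x V Pl by (cases p) (auto simp: moveO_def Let_def in_edges_def)
    qed
  next
    fix z assume "z \<in> gr (moveO G v P n) ` gE (moveO G v P n)"
    then obtain x where x: "x \<in> gE (moveO G v P n)" "z = gr (moveO G v P n) x" by blast
    show "z \<in> gV (moveO G v P n)"
    proof (cases x)
      case (Inl e) then show ?thesis using x V by (auto simp: moveO_def Let_def in_edges_def)
    next
      case (Inr p) then show ?thesis using x by (cases p) (auto simp: moveO_def Let_def in_edges_def)
    qed
  qed
qed

lemma wf_moveI:
  assumes w: "wf_graph G" and ok: "moveI_ok G v P n"
  shows "wf_graph (moveI G v P n)"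
proof -
  have V: "gs G e \<in> gV G" "gr G e \<in> gV G" if "e \<in> gE G" for e using w that by (auto simp: wf_graph_def)
  have Pl: "P e < n" if "e \<in> gE G" "gr G e = v" for e
    using ok that by (auto simp: moveI_ok_def is_partition_def in_edges_def)
  show ?thesis unfolding wf_graph_def
  proof (intro conjI subsetI)
    fix z assume "z \<in> gs (moveI G v P n) ` gE (moveI G v P n)"
    then obtain x where x: "x \<in> gE (moveI G v P n)" "z = gs (moveI G v P n) x" by blast
    show "z \<in> gV (moveI G v P n)"
    proof (cases x)
      case (Inl e) then show ?thesis using x V by (auto simp: moveI_def Let_def out_edges_def)
    next
      case (Inr p) then show ?thesis using x by (cases p) (auto simp: moveI_def Let_def out_edges_def)
    qed
  next
    fix z assume "z \<in> gr (moveI G v P n) ` gE (moveI G v P n)"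
    then obtain x where x: "x \<in> gE (moveI G v P n)" "z = gr (moveI G v P n) x" by blast
    show "z \<in> gV (moveI G v P n)"
    proof (cases x)
      case (Inl e) then show ?thesis using x V Pl by (auto simp: moveI_def Let_def)
    next
      case (Inr p) then show ?thesis using x V Pl by (cases p) (auto simp: moveI_def Let_def out_edges_def)
    qed
  qed
qed



lemma enat_less_one: "(enat k < 1) = (k = 0)"
  by (simp add: one_enat_def)

lemma R_mgraph:
  assumes tm: "t < m" and um: "u < m" and Cmt: "C m t = 1"
    and row: "\<forall>y<Suc m. y \<noteq> t \<longrightarrow> C m y = 0"
    and col: "\<forall>y<Suc m. y \<noteq> u \<longrightarrow> C y m = 0"
  shows "move_step (mgraph (Suc m) C) (mgraph m (\<lambda>x y. C x y + (if y = t then C x m else 0)))"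
proof -
  define G where "G = mgraph (Suc m) C"
  define f where "f = enc m t 0"
  have fE: "f \<in> gE G" using tm Cmt by (simp add: G_def f_def mgraph_E enat_less_one)
  have out: "out_edges G m = {f}"
  proof
    show "out_edges G m \<subseteq> {f}"
    proof
      fix e assume "e \<in> out_edges G m"
      then have e: "e \<in> gE G" "gs G e = m" by (auto simp: out_edges_def)
      then obtain x y k where "e = enc x y k" "x < Suc m" "y < Suc m" "enat k < C x y"
        unfolding G_def by (auto elim: mgraph_E_cases)
      moreover then have "x = m" using e by (simp add: G_def mgraph_simps)
      ultimately show "e \<in> {f}" using row Cmt by (cases "y = t") (auto simp: f_def enat_less_one)
    qed
  next
    show "{f} \<subseteq> out_edges G m" using fE by (simp add: out_edges_def f_def G_def mgraph_simps)
  qed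
  have inu: "\<forall>e\<in>in_edges G m. gs G e = u"
  proof
    fix e assume "e \<in> in_edges G m"
    then have e: "e \<in> gE G" "gr G e = m" by (auto simp: in_edges_def)
    then obtain x y k where "e = enc x y k" "x < Suc m" "y < Suc m" "enat k < C x y"
      unfolding G_def by (auto elim: mgraph_E_cases)
    moreover then have "y = m" using e by (simp add: G_def mgraph_simps)
    ultimately show "gs G e = u" using col by (cases "x = u") (auto simp: G_def mgraph_simps)
  qed
  have grf: "gr G f = t" "gs G f = m" by (simp_all add: G_def f_def mgraph_simps)
  have ok: "moveR_ok G m f"
    unfolding moveR_ok_def regular_def is_sink_def inf_emitter_def
    using out inu grf tm um by (auto simp: G_def mgraph_simps)
  have V: "gV (moveR G m f) = {..<m}" by (auto simp: moveR_def G_def mgraph_simps)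
  have iso: "graph_iso (moveR G m f) (mgraph m (\<lambda>x y. C x y + (if y = t then C x m else 0)))"
  proof (rule iso_by_counts[where fv = id])
    show "wf_graph (moveR G m f)" using wf_moveR[OF _ ok] wf_mgraph G_def by blast
    show "wf_graph (mgraph m (\<lambda>x y. C x y + (if y = t then C x m else 0)))" by (rule wf_mgraph)
    show "bij_betw id (gV (moveR G m f)) (gV (mgraph m (\<lambda>x y. C x y + (if y = t then C x m else 0))))"
      by (simp add: V mgraph_simps)
    show "\<forall>x\<in>gV (moveR G m f). \<forall>y\<in>gV (moveR G m f). ecard (between (moveR G m f) x y) =
        ecard (between (mgraph m (\<lambda>x y. C x y + (if y = t then C x m else 0))) (id x) (id y))"
      unfolding V using grf by (auto simp: ecard_moveR ecard_mgraph G_def)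
  qed
  show ?thesis unfolding move_step_def using ok iso fin_mgraph G_def by blast
qed



lemma ecard_zero_empty: "ecard S = 0 \<Longrightarrow> S = {}"
  by (auto simp: ecard_def zero_enat_def split: if_splits)

lemma O_mgraph:
  assumes tm: "t < m" and Cmt: "C m t \<noteq> 0"
    and g2: "\<exists>e\<in>out_edges (mgraph (Suc m) C) m. e \<noteq> enc m t 0"
    and fin: "\<forall>y<Suc m. C m y \<noteq> \<infinity>" and loop: "C m m = 0"
  shows "move_step (mgraph (Suc m) C) (mgraph (Suc (Suc m)) (\<lambda>x y.
      if x = Suc m then (if y = t then 1 else 0)
      else if x = m then (if y = Suc m then 0 else if y = t then C m t - 1 else C m y)
      else (if y = Suc m then C x m else C x y)))"
    (is "move_step ?G (mgraph _ ?C1)")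
proof -
  define G where "G = ?G"
  define g where "g = enc m t 0"
  define P where "P e = (if e = g then 0 else (1::nat))" for e
  have gE: "g \<in> gE G" using tm Cmt by (simp add: G_def g_def mgraph_E zero_enat_def[symmetric] i0_less)
  have gout: "g \<in> out_edges G m" using gE by (simp add: out_edges_def g_def G_def mgraph_simps)
  have outfin: "finite (out_edges G m)" using mgraph_out_finite[of "Suc m" C m] fin G_def by simp
  have ok: "moveO_ok G m P 2"
    unfolding moveO_ok_def is_sink_def is_partition_def
  proof (intro conjI)
    show "m \<in> gV G" by (simp add: G_def mgraph_simps)
    show "out_edges G m \<noteq> {}" using gout by blast
    show "\<forall>e\<in>out_edges G m. P e < 2" by (simp add: P_def)
    show "\<forall>i<2. \<exists>e\<in>out_edges G m. P e = i"
    proof (intro allI impI)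
      fix i :: nat assume "i < 2"
      then have "i = 0 \<or> i = 1" by auto
      then show "\<exists>e\<in>out_edges G m. P e = i" using gout g2 by (auto simp: P_def g_def G_def)
    qed
    have emp: "{i. i < 2 \<and> infinite {e \<in> out_edges G m. P e = i}} = {}" using outfin by auto
    show "card {i. i < 2 \<and> infinite {e \<in> out_edges G m. P e = i}} \<le> 1" by (subst emp) simp
  qed
  define MO where "MO = moveO G m P 2"
  define fv where "fv z = (case z of Inl x \<Rightarrow> x | Inr a \<Rightarrow> if (a::nat) = 0 then Suc m else m)" for z
  have VMO: "gV MO = Inl ` {..<m} \<union> Inr ` {0, 1}"
    by (auto simp: MO_def moveO_def Let_def G_def mgraph_simps)
  have bij: "bij_betw fv (gV MO) {..<Suc (Suc m)}"
    unfolding bij_betw_def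
  proof
    show "inj_on fv (gV MO)" unfolding VMO by (auto simp: inj_on_def fv_def)
    show "fv ` gV MO = {..<Suc (Suc m)}"
    proof
      show "fv ` gV MO \<subseteq> {..<Suc (Suc m)}" unfolding VMO by (auto simp: fv_def)
      show "{..<Suc (Suc m)} \<subseteq> fv ` gV MO"
      proof
        fix x assume "x \<in> {..<Suc (Suc m)}"
        then have "x < m \<or> x = m \<or> x = Suc m" by auto
        then show "x \<in> fv ` gV MO" unfolding VMO
          by (elim disjE) (force simp: fv_def)+
      qed
    qed
  qed
  have cG: "ecard (between G x y) = C x y" if "x < Suc m" "y < Suc m" for x y
    using that by (simp add: G_def ecard_mgraph)
  have gmt: "g \<in> between G m t" using gE by (simp add: between_def g_def G_def mgraph_simps)
  have gb: "g \<notin> between G m y" if "y \<noteq> t" for y using that by (simp add: between_def g_def G_def mgraph_simps)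
  have lp: "between G m m = {}" using cG[of m m] loop by (simp add: ecard_zero_empty)
  have cnt: "ecard (between MO z1 z2) = ?C1 (fv z1) (fv z2)" if z: "z1 \<in> gV MO" "z2 \<in> gV MO" for z1 z2
  proof -
    consider (LL) x y where "z1 = Inl x" "z2 = Inl y" "x < m" "y < m"
      | (RL) a y where "z1 = Inr a" "z2 = Inl y" "a = 0 \<or> a = 1" "y < m"
      | (LR) x b where "z1 = Inl x" "z2 = Inr b" "x < m" "b = 0 \<or> b = 1"
      | (RR) a b where "z1 = Inr a" "z2 = Inr b" "a = 0 \<or> a = 1" "b = 0 \<or> b = 1"
      using z unfolding VMO by blast
    then show ?thesis
    proof cases
      case LL then show ?thesis
        by (simp add: MO_def between_moveO ecard_image fv_def cG)
    next
      case RL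
      show ?thesis
      proof (cases "a = 0")
        case True
        have "{e \<in> between G m y. P e = a} = (if y = t then {g} else {})"
          using True gmt gb by (auto simp: P_def)
        then show ?thesis using RL True tm
          by (simp add: MO_def between_moveO ecard_image fv_def)
      next
        case False
        then have a: "a = 1" using RL by simp
        have "{e \<in> between G m y. P e = a} = between G m y - {g}"
          using a by (auto simp: P_def)
        moreover have "ecard (between G m y - {g}) = (if y = t then C m t - 1 else C m y)"
          using gmt gb[of y] cG[of m y] RL by (auto simp: ecard_remove)
        ultimately show ?thesis using RL a tm
          by (simp add: MO_def between_moveO ecard_image fv_def)
      qed
    next
      case LR then show ?thesis
        by (auto simp: MO_def between_moveO ecard_image ecard_times_single fv_def cG inj_on_def)
    next
      case RR
      have "{e \<in> between G m m. P e = a} = {}" using lp by simp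
      then show ?thesis using RR tm loop
        by (auto simp: lp MO_def between_moveO ecard_image ecard_times_single fv_def inj_on_def)
    qed
  qed
  have iso: "graph_iso MO (mgraph (Suc (Suc m)) ?C1)"
  proof (rule iso_by_counts[where fv = fv])
    show "wf_graph MO" using wf_moveO[OF _ ok] wf_mgraph MO_def G_def by blast
    show "wf_graph (mgraph (Suc (Suc m)) ?C1)" by (rule wf_mgraph)
    show "bij_betw fv (gV MO) (gV (mgraph (Suc (Suc m)) ?C1))" using bij by (simp add: mgraph_simps)
    show "\<forall>x\<in>gV MO. \<forall>y\<in>gV MO. ecard (between MO x y) = ecard (between (mgraph (Suc (Suc m)) ?C1) (fv x) (fv y))"
    proof (intro ballI)
      fix x y assume xy: "x \<in> gV MO" "y \<in> gV MO"
      have "fv x < Suc (Suc m)" "fv y < Suc (Suc m)" using bij xy by (auto simp: bij_betw_def)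
      then show "ecard (between MO x y) = ecard (between (mgraph (Suc (Suc m)) ?C1) (fv x) (fv y))"
        using cnt[OF xy] by (simp add: ecard_mgraph)
    qed
  qed
  show ?thesis unfolding move_step_def using ok iso fin_mgraph G_def MO_def by blast
qed



lemma enat_plus_minus: "c \<noteq> 0 \<Longrightarrow> a + 1 + (enat c - 1) = a + enat c"
  by (cases a) (auto simp: one_enat_def)

lemma contract:
  fixes s :: nat
  shows "\<And>C. u < m \<Longrightarrow> C u m = 1 \<Longrightarrow> (\<forall>y<Suc m. y \<noteq> u \<longrightarrow> C y m = 0) \<Longrightarrow>
    (\<forall>y<m. C m y \<noteq> \<infinity>) \<Longrightarrow> C m m = 0 \<Longrightarrow> (\<Sum>y<m. the_enat (C m y)) = s \<Longrightarrow> 1 \<le> s \<Longrightarrow>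
    move_equiv (mgraph (Suc m) C) (mgraph m (\<lambda>x y. C x y + (if x = u then C m y else 0)))"
proof (induction s rule: less_induct)
  case (less s C)
  note um = less.prems(1) and Cum = less.prems(2) and col = less.prems(3)
    and fin = less.prems(4) and loop = less.prems(5) and sm = less.prems(6) and s1 = less.prems(7)
  define c where "c y = the_enat (C m y)" for y
  have Ce: "C m y = enat (c y)" if "y < m" for y using fin that by (auto simp: c_def)
  have "\<exists>t<m. c t \<noteq> 0"
  proof (rule ccontr)
    assume "\<not> ?thesis"
    then have "(\<Sum>y<m. c y) = 0" by simp
    then show False using sm s1 c_def by simp
  qed
  then obtain t where tm: "t < m" and ct: "c t \<noteq> 0" by blast
  have split: "(\<Sum>y<m. c y) = c t + (\<Sum>y\<in>{..<m} - {t}. c y)"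
    using tm by (simp add: sum.remove)
  have Cmt: "C m t \<noteq> 0" using Ce[OF tm] ct by (simp add: zero_enat_def)
  have colx: "C x m = (if x = u then 1 else 0)" if "x < Suc m" for x using col Cum that by auto
  show ?case
  proof (cases "s = 1")
    case True
    then have e1: "c t + (\<Sum>y\<in>{..<m} - {t}. c y) = 1" using split sm c_def by simp
    then have "c t = 1" "(\<Sum>y\<in>{..<m} - {t}. c y) = 0" using ct by linarith+
    then have "c t = 1" "\<forall>y\<in>{..<m} - {t}. c y = 0" by simp_all
    then have row: "\<forall>y<Suc m. y \<noteq> t \<longrightarrow> C m y = 0" and Cmt1: "C m t = 1"
      using Ce loop tm by (auto simp: zero_enat_def one_enat_def less_Suc_eq)
    have st: "move_step (mgraph (Suc m) C) (mgraph m (\<lambda>x y. C x y + (if y = t then C x m else 0)))"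
      by (rule R_mgraph[OF tm um Cmt1 row col])
    have "mgraph m (\<lambda>x y. C x y + (if y = t then C x m else 0)) =
          mgraph m (\<lambda>x y. C x y + (if x = u then C m y else 0))"
      by (rule mgraph_cong) (use row Cmt1 colx in auto)
    then show ?thesis using step_equiv[OF st] by simp
  next
    case False
    then have s2: "s \<ge> 2" using s1 by simp
    have g2: "\<exists>e\<in>out_edges (mgraph (Suc m) C) m. e \<noteq> enc m t 0"
    proof (cases "c t \<ge> 2")
      case True
      then have "enc m t 1 \<in> out_edges (mgraph (Suc m) C) m"
        using Ce[OF tm] tm by (simp add: out_edges_def mgraph_E mgraph_simps)
      then show ?thesis by force
    next
      case False
      have "c t + (\<Sum>y\<in>{..<m} - {t}. c y) \<ge> 2" using split sm s2 c_def by simp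
      then have "(\<Sum>y\<in>{..<m} - {t}. c y) \<noteq> 0" using False by linarith
      then obtain y where y: "y \<in> {..<m} - {t}" "c y \<noteq> 0" by (meson sum.neutral)
      then have "enc m y 0 \<in> out_edges (mgraph (Suc m) C) m"
        using Ce[of y] by (simp add: out_edges_def mgraph_E mgraph_simps zero_enat_def)
      then show ?thesis using y by force
    qed
    have finS: "\<forall>y<Suc m. C m y \<noteq> \<infinity>" using fin loop by (auto simp: less_Suc_eq zero_enat_def)
    define C1 where "C1 = (\<lambda>x y.
      if x = Suc m then (if y = t then 1 else 0)
      else if x = m then (if y = Suc m then 0 else if y = t then C m t - 1 else C m y)
      else (if y = Suc m then C x m else C x y))"
    have st1: "move_step (mgraph (Suc m) C) (mgraph (Suc (Suc m)) C1)"
      unfolding C1_def by (rule O_mgraph[OF tm Cmt g2 finS loop])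
    have st2: "move_step (mgraph (Suc (Suc m)) C1)
       (mgraph (Suc m) (\<lambda>x y. C1 x y + (if y = t then C1 x (Suc m) else 0)))"
    proof (rule R_mgraph[where u=u and t=t])
      show "t < Suc m" "u < Suc m" using tm um by simp_all
      show "C1 (Suc m) t = 1" by (simp add: C1_def)
      show "\<forall>y<Suc (Suc m). y \<noteq> t \<longrightarrow> C1 (Suc m) y = 0" by (simp add: C1_def)
      show "\<forall>y<Suc (Suc m). y \<noteq> u \<longrightarrow> C1 y (Suc m) = 0"
      proof (intro allI impI)
        fix y assume y: "y < Suc (Suc m)" "y \<noteq> u"
        then have "y < m \<or> y = m \<or> y = Suc m" by linarith
        then show "C1 y (Suc m) = 0"
        proof (elim disjE)
          assume "y < m" then show ?thesis using col y(2) by (simp add: C1_def)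
        qed (use tm in \<open>simp_all add: C1_def\<close>)
      qed
    qed
    define C2 where "C2 = (\<lambda>x y. C1 x y + (if y = t then C1 x (Suc m) else 0))"
    have C2m: "C2 m y = (if y = t then C m t - 1 else C m y)" if "y < m" for y
      using that tm by (simp add: C2_def C1_def)
    have C2x: "C2 x y = C x y + (if y = t then C x m else 0)" if "x < m" "y < m" for x y
      using that by (simp add: C2_def C1_def)
    have sum2: "(\<Sum>y<m. the_enat (C2 m y)) = s - 1"
    proof -
      have "(\<Sum>y<m. the_enat (C2 m y)) = (\<Sum>y<m. if y = t then c t - 1 else c y)"
        by (rule sum.cong) (auto simp: C2m Ce one_enat_def)
      also have "\<dots> = (c t - 1) + (\<Sum>y\<in>{..<m} - {t}. c y)"
        using tm by (simp add: sum.remove)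
      finally show ?thesis using split sm ct c_def by simp
    qed
    have ih: "move_equiv (mgraph (Suc m) C2) (mgraph m (\<lambda>x y. C2 x y + (if x = u then C2 m y else 0)))"
    proof (rule less.IH[of "s - 1"])
      show "s - 1 < s" using s1 by simp
      show "u < m" by (rule um)
      show "C2 u m = 1" using tm um Cum by (simp add: C2_def C1_def)
      show "\<forall>y<Suc m. y \<noteq> u \<longrightarrow> C2 y m = 0" using tm col loop by (auto simp: C2_def C1_def)
      show "\<forall>y<m. C2 m y \<noteq> \<infinity>" using C2m Ce by (auto simp: one_enat_def)
      show "C2 m m = 0" using tm loop by (simp add: C2_def C1_def)
      show "(\<Sum>y<m. the_enat (C2 m y)) = s - 1" by (rule sum2)
      show "1 \<le> s - 1" using s2 by simp
    qed
    have "mgraph m (\<lambda>x y. C2 x y + (if x = u then C2 m y else 0)) =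
          mgraph m (\<lambda>x y. C x y + (if x = u then C m y else 0))"
    proof (rule mgraph_cong)
      fix x y assume xy: "x < m" "y < m"
      show "C2 x y + (if x = u then C2 m y else 0) = C x y + (if x = u then C m y else 0)"
      proof (cases "x = u")
        case True
        then show ?thesis using xy C2x C2m colx Ce[OF tm] ct enat_plus_minus by auto
      next
        case False
        then show ?thesis using xy C2x colx by auto
      qed
    qed
    then show ?thesis
      using equiv_trans[OF step_equiv[OF st1] equiv_trans[OF step_equiv[OF st2]]] ih C2_def by simp
  qed
qed



lemma I_mgraph:
  assumes ij: "i < n" "j < n" "i \<noteq> j" and Aij: "A i j \<noteq> 0" and Ajj: "A j j \<noteq> 0"
    and rowj: "\<forall>l<n. A j l \<noteq> \<infinity>"
  shows "move_step (mgraph n A) (mgraph (Suc n) (\<lambda>x y.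
     if y = n then (if x = i then 1 else 0) else if x = n then A j y
     else if y = j \<and> x = i then A i j - 1 else A x y))"
    (is "move_step ?G (mgraph _ ?H)")
proof -
  define G where "G = ?G"
  define f where "f = enc i j 0"
  define lp where "lp = enc j j 0"
  define P where "P e = (if e = f then 0 else (1::nat))" for e
  have fE: "f \<in> gE G" using ij Aij by (simp add: G_def f_def mgraph_E zero_enat_def[symmetric] i0_less)
  have lE: "lp \<in> gE G" using ij Ajj by (simp add: G_def lp_def mgraph_E zero_enat_def[symmetric] i0_less)
  have fl: "f \<noteq> lp" using ij by (simp add: f_def lp_def)
  have fin: "finite (out_edges G j)" using mgraph_out_finite[of n A j] rowj ij G_def by simp
  have ok: "moveI_ok G j P 2"
    unfolding moveI_ok_def regular_def is_sink_def inf_emitter_def is_source_def is_partition_def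
  proof (intro conjI)
    show "j \<in> gV G" using ij by (simp add: G_def mgraph_simps)
    show "out_edges G j \<noteq> {}" using lE by (auto simp: out_edges_def lp_def G_def mgraph_simps)
    show "\<not> infinite (out_edges G j)" using fin by simp
    show "in_edges G j \<noteq> {}" using lE by (auto simp: in_edges_def lp_def G_def mgraph_simps)
    show "\<forall>e\<in>in_edges G j. P e < 2" by (simp add: P_def)
    show "\<forall>k<2. \<exists>e\<in>in_edges G j. P e = k"
    proof (intro allI impI)
      fix k :: nat assume "k < 2"
      then have "k = 0 \<or> k = 1" by auto
      moreover have "f \<in> in_edges G j" "lp \<in> in_edges G j" using fE lE
        by (simp_all add: in_edges_def f_def lp_def G_def mgraph_simps)
      ultimately show "\<exists>e\<in>in_edges G j. P e = k" using fl by (auto simp: P_def)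
    qed
  qed
  define MI where "MI = moveI G j P 2"
  define fv where "fv z = (case z of Inl x \<Rightarrow> x | Inr a \<Rightarrow> if (a::nat) = 0 then n else j)" for z
  have VMI: "gV MI = Inl ` ({..<n} - {j}) \<union> Inr ` {0, 1}"
    by (auto simp: MI_def moveI_def Let_def G_def mgraph_simps)
  have bij: "bij_betw fv (gV MI) {..<Suc n}"
    unfolding bij_betw_def
  proof
    show "inj_on fv (gV MI)" unfolding VMI using ij by (auto simp: inj_on_def fv_def)
    show "fv ` gV MI = {..<Suc n}"
    proof
      show "fv ` gV MI \<subseteq> {..<Suc n}" unfolding VMI using ij by (auto simp: fv_def)
      show "{..<Suc n} \<subseteq> fv ` gV MI"
      proof
        fix x assume "x \<in> {..<Suc n}"
        then have "(x < n \<and> x \<noteq> j) \<or> x = j \<or> x = n" by auto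
        then show "x \<in> fv ` gV MI" unfolding VMI
          by (elim disjE) (force simp: fv_def)+
      qed
    qed
  qed
  have cG: "ecard (between G x y) = A x y" if "x < n" "y < n" for x y
    using that by (simp add: G_def ecard_mgraph)
  have fb: "f \<in> between G i j" using fE by (simp add: between_def f_def G_def mgraph_simps)
  have fb2: "f \<notin> between G x y" if "x \<noteq> i \<or> y \<noteq> j" for x y
    using that by (auto simp: between_def f_def G_def mgraph_simps)
  have cnt: "ecard (between MI z1 z2) = ?H (fv z1) (fv z2)" if z: "z1 \<in> gV MI" "z2 \<in> gV MI" for z1 z2
  proof -
    consider (LL) x y where "z1 = Inl x" "z2 = Inl y" "x < n" "y < n" "x \<noteq> j" "y \<noteq> j"
      | (RL) a y where "z1 = Inr a" "z2 = Inl y" "a = 0 \<or> a = 1" "y < n" "y \<noteq> j"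
      | (LR) x b where "z1 = Inl x" "z2 = Inr b" "x < n" "x \<noteq> j" "b = 0 \<or> b = 1"
      | (RR) a b where "z1 = Inr a" "z2 = Inr b" "a = 0 \<or> a = 1" "b = 0 \<or> b = 1"
      using z unfolding VMI by blast
    then show ?thesis
    proof cases
      case LL then show ?thesis
        by (simp add: MI_def between_moveI ecard_image fv_def cG)
    next
      case RL
      then have "ecard (between MI z1 z2) = A j y"
        by (auto simp: MI_def between_moveI ecard_image ecard_times_single inj_on_def cG ij)
      then show ?thesis using RL ij by (auto simp: fv_def)
    next
      case LR
      show ?thesis
      proof (cases "b = 0")
        case True
        have "{e \<in> between G x j. P e = b} = (if x = i then {f} else {})"
          using True fb fb2 by (auto simp: P_def)
        then show ?thesis using LR True ij
          by (simp add: MI_def between_moveI ecard_image fv_def)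
      next
        case False
        then have b: "b = 1" using LR by simp
        have "{e \<in> between G x j. P e = b} = between G x j - {f}" using b by (auto simp: P_def)
        moreover have "ecard (between G x j - {f}) = (if x = i then A i j - 1 else A x j)"
          using fb fb2[of x j] cG[of x j] LR ij by (auto simp: ecard_remove)
        ultimately show ?thesis using LR b ij
          by (simp add: MI_def between_moveI ecard_image fv_def)
      qed
    next
      case RR
      have e0: "{e \<in> between G j j. P e = 0} = {}" using fb2[of j j] ij by (auto simp: P_def)
      have e1: "{e \<in> between G j j. P e = Suc 0} = between G j j" using fb2[of j j] ij by (auto simp: P_def)
      show ?thesis
      proof (cases "b = 0")
        case True
        then show ?thesis using RR ij
          by (auto simp: e0 MI_def between_moveI ecard_image ecard_times_single fv_def inj_on_def)
      next
        case False
        then have "b = 1" using RR by simp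
        then show ?thesis using RR ij cG[of j j]
          by (auto simp: e1 MI_def between_moveI ecard_image ecard_times_single fv_def inj_on_def)
      qed
    qed
  qed
  have iso: "graph_iso MI (mgraph (Suc n) ?H)"
  proof (rule iso_by_counts[where fv = fv])
    show "wf_graph MI" using wf_moveI[OF _ ok] wf_mgraph MI_def G_def by blast
    show "wf_graph (mgraph (Suc n) ?H)" by (rule wf_mgraph)
    show "bij_betw fv (gV MI) (gV (mgraph (Suc n) ?H))" using bij by (simp add: mgraph_simps)
    show "\<forall>x\<in>gV MI. \<forall>y\<in>gV MI. ecard (between MI x y) = ecard (between (mgraph (Suc n) ?H) (fv x) (fv y))"
    proof (intro ballI)
      fix x y assume xy: "x \<in> gV MI" "y \<in> gV MI"
      have "fv x < Suc n" "fv y < Suc n" using bij xy by (auto simp: bij_betw_def)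
      then show "ecard (between MI x y) = ecard (between (mgraph (Suc n) ?H) (fv x) (fv y))"
        using cnt[OF xy] by (simp add: ecard_mgraph)
    qed
  qed
  show ?thesis unfolding move_step_def using ok iso fin_mgraph G_def MI_def by blast
qed



lemma enat_sub_comm: "a \<noteq> 0 \<Longrightarrow> a - 1 + b = a + b - (1::enat)"
  by (cases a; cases b) (auto simp: one_enat_def zero_enat_def)

lemma enat_le_add_minus: "b \<noteq> 0 \<Longrightarrow> a \<le> a + b - (1::enat)"
  by (cases a; cases b) (auto simp: one_enat_def zero_enat_def)

lemma sc_mono:
  assumes le: "\<forall>x<m. \<forall>y<m. A x y \<le> B x y" and sc: "strongly_connected (mgraph m A)"
  shows "strongly_connected (mgraph m B)"
proof -
  have sub: "{(gs (mgraph m A) e, gr (mgraph m A) e) | e. e \<in> gE (mgraph m A)} \<subseteq>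
             {(gs (mgraph m B) e, gr (mgraph m B) e) | e. e \<in> gE (mgraph m B)}"
  proof
    fix p assume "p \<in> {(gs (mgraph m A) e, gr (mgraph m A) e) | e. e \<in> gE (mgraph m A)}"
    then obtain e where e: "p = (gs (mgraph m A) e, gr (mgraph m A) e)" "e \<in> gE (mgraph m A)" by blast
    then obtain x y k where xyk: "e = enc x y k" "x < m" "y < m" "enat k < A x y" by (auto elim: mgraph_E_cases)
    have "enat k < B x y" using xyk(4) le[rule_format, OF xyk(2,3)] by (rule order_less_le_trans)
    then have "e \<in> gE (mgraph m B)" using xyk by (simp add: mgraph_E)
    then show "p \<in> {(gs (mgraph m B) e, gr (mgraph m B) e) | e. e \<in> gE (mgraph m B)}"
      using e xyk by (metis (mono_tags, lifting) mem_Collect_eq mgraph_simps(2,3))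
  qed
  show ?thesis using sc rtrancl_mono[OF sub] unfolding strongly_connected_def by (auto simp: mgraph_simps)
qed

theorem lemma7p1:
  fixes n i j :: nat and A :: "nat \<Rightarrow> nat \<Rightarrow> enat"
  assumes diag: "\<forall>k<n. A k k \<noteq> 0"
    and ij: "i < n" "j < n" "i \<noteq> j"
    and aij: "A i j \<noteq> 0"
    and rowj: "\<forall>l<n. A j l \<noteq> \<infinity>"
  shows "mat_move_equiv n A (row_add A i j)
     \<and> (\<forall>k<n. row_add A i j k k \<noteq> 0)
     \<and> (irreducible_mat n A \<longrightarrow> irreducible_mat n (row_add A i j))
     \<and> (\<forall>m\<le>n. irreducible_mat m A \<longrightarrow> irreducible_mat m (row_add A i j))"
proof -
  have Ajj: "A j j \<noteq> 0" using diag ij by simp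
  define H where "H = (\<lambda>x y.
     if y = n then (if x = i then 1 else 0) else if x = n then A j y
     else if y = j \<and> x = i then A i j - 1 else A x y)"
  have st: "move_step (mgraph n A) (mgraph (Suc n) H)"
    unfolding H_def by (rule I_mgraph[OF ij aij Ajj rowj])
  define s where "s = (\<Sum>y<n. the_enat (H n y))"
  have "the_enat (H n j) \<le> s" unfolding s_def using ij by (intro member_le_sum) auto
  moreover have "the_enat (H n j) \<noteq> 0" using Ajj rowj ij
    by (cases "A j j") (auto simp: H_def zero_enat_def)
  ultimately have s1: "1 \<le> s" by linarith
  have ce: "move_equiv (mgraph (Suc n) H) (mgraph n (\<lambda>x y. H x y + (if x = i then H n y else 0)))"
    by (rule contract[where s=s and u=i and m=n and C=H]) (use ij rowj s_def s1 in \<open>auto simp: H_def\<close>)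
  have "mgraph n (\<lambda>x y. H x y + (if x = i then H n y else 0)) = mgraph n (row_add A i j)"
    by (rule mgraph_cong) (use ij aij in \<open>auto simp: H_def row_add_def enat_sub_comm\<close>)
  then have P1: "mat_move_equiv n A (row_add A i j)"
    using equiv_trans[OF step_equiv[OF st] ce] by (simp add: mat_move_equiv_def)
  have P2: "\<forall>k<n. row_add A i j k k \<noteq> 0" using diag ij by (auto simp: row_add_def)
  have le: "A x y \<le> row_add A i j x y" for x y
  proof -
    have "A i y \<le> A i y + A j y" by simp
    then show ?thesis using enat_le_add_minus[OF Ajj, of "A i j"] by (simp add: row_add_def)
  qed
  have P4: "\<forall>m\<le>n. irreducible_mat m A \<longrightarrow> irreducible_mat m (row_add A i j)"
    unfolding irreducible_mat_def
  proof (intro allI impI)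
    fix m assume "m \<le> n" "strongly_connected (mgraph m A)"
    then show "strongly_connected (mgraph m (row_add A i j))" using le sc_mono by blast
  qed
  show ?thesis using P1 P2 P4 by blast
qed


end
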